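(* Let $n\ge2$ and let $Z_1=\{z_{j,1}\}_{j=1}^n$ and $Z_2=\{z_{j,2}\}_{j=1}^{n-1}$ be subsets of the unit circle, $z_{j,l}=e^{ix_{j,l}}$, with exactly one common point, arranged as $$x_{1,1}<x_{1,2}<x_{2,1}<x_{2,2}<\dots<x_{n-1,1}<x_{n-1,2}=x_{n,1}<x_{1,1}+2\pi.$$ For $l=1,2$ let $\mathcal{C}_1^{(l)}=\mathcal{C}(\alpha_0^{(l)},\dots,\alpha_{n-2}^{(l)};\beta_1^{(l)})$ (order $n$) and $\mathcal{C}_2^{(l)}=\mathcal{C}(\alpha_0^{(l)},\dots,\alpha_{n-3}^{(l)};\beta_2^{(l)})$ (order $n-1$) be finite CMV matrices such that the set of eigenvalues of $\mathcal{C}_1^{(l)}$ is $Z_1$ and the set of eigenvalues of $\mathcal{C}_2^{(l)}$ is $Z_2$. If $\alpha_{n-2}^{(1)}=\alpha_{n-2}^{(2)}$, then $\mathcal{C}_1^{(1)}=\mathcal{C}_1^{(2)}$ and $\mathcal{C}_2^{(1)}=\mathcal{C}_2^{(2)}$.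
   Context: For $\alpha\in\mathbb{C}$ with $|\alpha|\le 1$ put $\rho=\sqrt{1-|\alpha|^2}$ and $\Theta(\alpha)=\begin{pmatrix}\bar\alpha&\rho\\ \rho&-\alpha\end{pmatrix}$. Given $N\ge1$, $\alpha_0,\dots,\alpha_{N-2}$ with $|\alpha_j|<1$ and $\beta$ with $|\beta|=1$, the finite CMV matrix $\mathcal{C}(\alpha_0,\dots,\alpha_{N-2};\beta)$ of order $N$ is the $N\times N$ matrix $\mathcal{L}\mathcal{M}$, where: if $N=2k+1$, $\mathcal{L}=\Theta(\alpha_0)\oplus\Theta(\alpha_2)\oplus\cdots\oplus\Theta(\alpha_{2k-2})\oplus\bar\beta$ and $\mathcal{M}=1\oplus\Theta(\alpha_1)\oplus\cdots\oplus\Theta(\alpha_{2k-1})$; if $N=2k$, $\mathcal{L}=\Theta(\alpha_0)\oplus\Theta(\alpha_2)\oplus\cdots\oplus\Theta(\alpha_{2k-2})$ and $\mathcal{M}=1\oplus\Theta(\alpha_1)\oplus\cdots\oplus\Theta(\alpha_{2k-3})\oplus\bar\beta$ ($1$ and $\bar\beta$ are $1\times1$ blocks; for $N=1$ the matrix is $(\bar\beta)$). *)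

theory Defs
  imports Complex_Main "Jordan_Normal_Form.Char_Poly"
begin

definition cmv_rho :: "complex \<Rightarrow> complex" where
  "cmv_rho a = complex_of_real (sqrt (1 - (cmod a)^2))"

text \<open>Entry (i,j), i,j in {0,1}, of Theta(a) = [[cnj a, rho], [rho, -a]]\<close>
definition theta_entry :: "complex \<Rightarrow> nat \<Rightarrow> nat \<Rightarrow> complex" where
  "theta_entry a i j =
     (if i = 0 \<and> j = 0 then cnj a
      else if i = 1 \<and> j = 1 then - a
      else cmv_rho a)"

text \<open>L = Theta(alpha_0) (+) Theta(alpha_2) (+) ... , padded with cnj beta in the last
  diagonal entry when N is odd.  The list al = [alpha_0, ..., alpha_{N-2}].\<close>
definition cmv_L :: "nat \<Rightarrow> complex list \<Rightarrow> complex \<Rightarrow> complex mat" where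
  "cmv_L N al b = mat N N (\<lambda>(i,j).
     if i div 2 = j div 2 \<and> 2 * (i div 2) + 1 < N
       then theta_entry (al ! (2 * (i div 2))) (i mod 2) (j mod 2)
     else if i = j then cnj b else 0)"

text \<open>M = 1 (+) Theta(alpha_1) (+) Theta(alpha_3) (+) ... , padded with cnj beta in the last
  diagonal entry when N is even.\<close>
definition cmv_M :: "nat \<Rightarrow> complex list \<Rightarrow> complex \<Rightarrow> complex mat" where
  "cmv_M N al b = mat N N (\<lambda>(i,j).
     if i = 0 \<and> j = 0 then 1
     else if 1 \<le> i \<and> 1 \<le> j \<and> (i - 1) div 2 = (j - 1) div 2 \<and> 2 * ((i - 1) div 2) + 2 < N
       then theta_entry (al ! (2 * ((i - 1) div 2) + 1)) ((i - 1) mod 2) ((j - 1) mod 2)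
     else if i = j then cnj b else 0)"

definition CMV :: "complex list \<Rightarrow> complex \<Rightarrow> complex mat" where
  "CMV al b = cmv_L (length al + 1) al b * cmv_M (length al + 1) al b"

end

theory Submission
  imports Defs
begin


definition szstep :: "complex poly \<times> complex poly \<Rightarrow> complex \<Rightarrow> complex poly \<times> complex poly" where
  "szstep pq a = (pCons 0 (fst pq) - Polynomial.smult (cnj a) (snd pq), snd pq - Polynomial.smult a (pCons 0 (fst pq)))"

definition sz :: "complex list \<Rightarrow> complex poly \<times> complex poly" where
  "sz xs = foldl szstep (1,1) xs"

lemma sz_Nil[simp]: "sz [] = (1,1)" by (simp add: sz_def)
lemma sz_snoc[simp]: "sz (xs @ [a]) = szstep (sz xs) a" by (simp add: sz_def)

lemma sz_props: "degree (fst (sz xs)) \<le> length xs \<and> coeff (fst (sz xs)) (length xs) = 1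
   \<and> degree (snd (sz xs)) \<le> length xs \<and> poly (snd (sz xs)) 0 = 1"
proof (induction xs rule: rev_induct)
  case Nil then show ?case by simp
next
  case (snoc a xs)
  obtain p q where pq: "sz xs = (p,q)" by fastforce
  from snoc pq have d1: "degree p \<le> length xs" and c1: "coeff p (length xs) = 1"
     and d2: "degree q \<le> length xs" and q0: "poly q 0 = 1" by auto
  have "degree (pCons 0 p) \<le> Suc (length xs)" using d1
    by (metis degree_pCons_le le_SucI not_less_eq_eq order_trans)
  moreover have "degree (Polynomial.smult (cnj a) q) \<le> Suc (length xs)" using d2
    by (meson degree_smult_le le_SucI order_trans)
  moreover have "degree (Polynomial.smult a (pCons 0 p)) \<le> Suc (length xs)"
    by (meson calculation(1) degree_smult_le order_trans)
  moreover have "coeff q (Suc (length xs)) = 0" using d2 by (simp add: coeff_eq_0)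
  ultimately show ?case using pq c1 q0 d2
    by (auto simp: szstep_def intro: degree_diff_le order_trans[OF _ le_SucI])
qed

lemma sz_fst0: "poly (fst (sz (xs @ [a]))) 0 = - cnj a"
  using sz_props[of xs] by (simp add: szstep_def)

lemma sz_inj: "length xs = length ys \<Longrightarrow> \<forall>a\<in>set xs. cmod a < 1 \<Longrightarrow> sz xs = sz ys \<Longrightarrow> xs = ys"
proof (induction xs arbitrary: ys rule: rev_induct)
  case Nil then show ?case by simp
next
  case (snoc x xs)
  then obtain ys0 y where ys: "ys = ys0 @ [y]"
    by (metis length_0_conv rev_exhaust snoc_eq_iff_butlast)
  have "- cnj x = - cnj y" using snoc.prems sz_fst0[of xs x] sz_fst0[of ys0 y] ys by simp
  hence xy: "x = y" by simp
  obtain p q where pq: "sz xs = (p,q)" by fastforce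
  obtain p' q' where pq': "sz ys0 = (p',q')" by fastforce
  have e1: "pCons 0 p - Polynomial.smult (cnj x) q = pCons 0 p' - Polynomial.smult (cnj x) q'"
   and e2: "q - Polynomial.smult x (pCons 0 p) = q' - Polynomial.smult x (pCons 0 p')"
    using snoc.prems ys xy pq pq' by (auto simp: szstep_def)
  define u where "u = p - p'"
  define v where "v = q - q'"
  have E1a: "pCons 0 p - pCons 0 p' = Polynomial.smult (cnj x) q - Polynomial.smult (cnj x) q'"
    using e1 by (metis add_diff_cancel_left' diff_add_eq diff_diff_eq2)
  have E1: "pCons 0 u = Polynomial.smult (cnj x) v" using E1a unfolding u_def v_def
    by (simp add: smult_diff_right)
  have E2a: "q - q' = Polynomial.smult x (pCons 0 p) - Polynomial.smult x (pCons 0 p')"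
    using e2 by (metis add_diff_cancel_left' diff_add_eq diff_diff_eq2)
  have E2: "v = Polynomial.smult x (pCons 0 u)" using E2a unfolding u_def v_def
    by (simp add: smult_diff_right)
  have "pCons 0 u = Polynomial.smult (cnj x * x) (pCons 0 u)" using E1 E2 by simp
  hence "Polynomial.smult (1 - cnj x * x) (pCons 0 u) = 0" by (simp add: algebra_simps smult_diff_left)
  moreover have "cnj x * x \<noteq> 1"
  proof
    assume "cnj x * x = 1"
    hence "cmod (cnj x * x) = 1" by simp
    hence "cmod x * cmod x = 1" by (simp add: norm_mult)
    moreover have "cmod x < 1" using snoc.prems by simp
    moreover have "cmod x * cmod x \<le> cmod x * 1"
      using \<open>cmod x < 1\<close> by (intro mult_left_mono) auto
    ultimately show False by simp
  qed
  ultimately have "u = 0" by simp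
  hence "v = 0" using E2 by simp
  hence "sz xs = sz ys0" using \<open>u=0\<close> pq pq' u_def v_def by simp
  moreover have "length xs = length ys0" using snoc.prems ys by simp
  ultimately have "xs = ys0" using snoc.IH snoc.prems by simp
  then show ?case using ys xy by simp
qed


definition trid :: "nat \<Rightarrow> (nat \<Rightarrow> 'a) \<Rightarrow> (nat \<Rightarrow> 'a) \<Rightarrow> 'a::comm_ring_1 mat" where
  "trid k d u = mat k k (\<lambda>(i,j). if i = j then d i else if j = Suc i then u i
      else if i = Suc j then u j else 0)"

lemma trid_carrier[simp]: "trid k d u \<in> carrier_mat k k" by (simp add: trid_def)

lemma trid_rec: "det (trid (Suc (Suc k)) d u) = d (Suc k) * det (trid (Suc k) d u) - u k ^ 2 * det (trid k d u)"
proof -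
  let ?A = "trid (Suc (Suc k)) d u"
  have A: "?A \<in> carrier_mat (Suc (Suc k)) (Suc (Suc k))" by simp
  have "det ?A = (\<Sum>j<Suc (Suc k). ?A $$ (Suc k, j) * cofactor ?A (Suc k) j)"
    by (rule laplace_expansion_row[OF A]) simp
  also have "\<dots> = ?A $$ (Suc k, k) * cofactor ?A (Suc k) k + ?A $$ (Suc k, Suc k) * cofactor ?A (Suc k) (Suc k)"
  proof -
    have "(\<Sum>j<k. ?A $$ (Suc k, j) * cofactor ?A (Suc k) j) = 0"
      by (rule sum.neutral) (auto simp: trid_def)
    then show ?thesis by simp
  qed
  moreover have md: "mat_delete ?A (Suc k) (Suc k) = trid (Suc k) d u"
    by (rule eq_matI) (auto simp: mat_delete_def trid_def)
  moreover have cf: "cofactor ?A (Suc k) k = - (u k * det (trid k d u))"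
  proof -
    let ?B = "mat_delete ?A (Suc k) k"
    have B: "?B \<in> carrier_mat (Suc k) (Suc k)" using mat_delete_carrier[OF A] by simp
    have "det ?B = (\<Sum>i<Suc k. ?B $$ (i, k) * cofactor ?B i k)"
      by (rule laplace_expansion_column[OF B]) simp
    also have "\<dots> = ?B $$ (k, k) * cofactor ?B k k"
    proof -
      have "(\<Sum>i<k. ?B $$ (i, k) * cofactor ?B i k) = 0"
        by (rule sum.neutral) (auto simp: trid_def mat_delete_def)
      then show ?thesis by simp
    qed
    moreover have "mat_delete ?B k k = trid k d u"
      by (rule eq_matI) (auto simp: mat_delete_def trid_def)
    moreover have "?B $$ (k,k) = u k" by (simp add: mat_delete_def trid_def)
    ultimately have "det ?B = u k * det (trid k d u)" by (simp add: cofactor_def)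
    then show ?thesis by (simp add: cofactor_def)
  qed
  ultimately show ?thesis by (simp add: trid_def cofactor_def power2_eq_square algebra_simps)
qed

lemma trid_0: "det (trid 0 d u) = 1" by simp
lemma trid_1: "det (trid (Suc 0) d u) = d 0"
  by (simp add: det_single trid_def)


definition dd :: "(nat \<Rightarrow> complex) \<Rightarrow> nat \<Rightarrow> complex poly" where
  "dd c i = (if i = 0 then [:-1, c 0:] else if even i then [:c (i-1), c i:]
             else [:- cnj (c i), - cnj (c (i-1)):])"
definition uu :: "(nat \<Rightarrow> complex) \<Rightarrow> nat \<Rightarrow> complex poly" where
  "uu c i = (if even i then [:0, cmv_rho (c i):] else [:- cmv_rho (c i):])"

lemma cm: "[:x:]*[:y:] = [:x*y::complex:]" by simp
lemma c1: "[:1 - z:] = 1 - [:z::complex:]" by (simp add: one_pCons)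
lemma cp: "[:x::complex:]^2 = [:x^2:]" by (simp add: power2_eq_square)

lemma rho_sq: "cmod a \<le> 1 \<Longrightarrow> [:cmv_rho a:]^2 = 1 - [:cnj a:] * [:a:]"
proof -
  assume h: "cmod a \<le> 1"
  have nn: "0 \<le> 1 - (cmod a)^2" using h by (simp add: abs_square_le_1)
  have "(cmv_rho a)^2 = complex_of_real ((sqrt (1 - (cmod a)^2))^2)"
    by (simp add: cmv_rho_def)
  also have "\<dots> = complex_of_real (1 - (cmod a)^2)" using nn by simp
  also have "\<dots> = 1 - cnj a * a"
    by (metis complex_norm_square mult.commute of_real_1 of_real_diff)
  finally have "(cmv_rho a)^2 = 1 - cnj a * a" .
  then show ?thesis by (simp only: cp c1 cm)
qed

definition Xp :: "complex poly" where "Xp = [:0,1:]"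
lemma pc: "pCons 0 (p::complex poly) = Xp * p" by (simp add: mult_pCons_left Xp_def)
lemma sm: "Polynomial.smult a (p::complex poly) = [:a:] * p" by simp
lemma pc2: "[:x::complex, y:] = [:x:] + [:y:] * Xp" by (simp add: Xp_def)
lemma h1: "[:-x::complex, -y:] = - ([:x:] + [:y:]*Xp)" by (simp add: Xp_def)
lemma h3: "[:0::complex, y:]^2 = Xp^2 * [:y:]^2" by (simp add: Xp_def power2_eq_square)
lemma h4: "[:-y::complex:]^2 = [:y:]^2" by (simp add: power2_eq_square)

lemma negc: "[:- x:] = - [:x::complex:]" by simp

lemma alg_even: fixes X A Ac Bc p q s :: "'a::comm_ring_1"
  shows "(-(Bc + Ac*X)) * (-s * (q - A*(X*p))) - (X^2*(1 - Ac*A)) * (s*p)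
     = -s * (X*(X*p - Ac*q) - Bc*(q - A*(X*p)))"
  by (simp add: algebra_simps power2_eq_square)

lemma alg_odd: fixes X A Ac B p q s :: "'a::comm_ring_1"
  shows "(A + B*X)*(s*(X*p - Ac*q)) - (1 - Ac*A)*(s*q) = -s*((q - A*(X*p)) - B*(X*(X*p - Ac*q)))"
  by (simp add: algebra_simps)

lemma map_upt_Suc: "map c [0..<Suc k] = map c [0..<k] @ [c k]" by simp

lemma trid_sz: "(\<forall>j<k. cmod (c j) \<le> 1) \<Longrightarrow> det (trid k (dd c) (uu c)) =
   (-1)^((k+1) div 2) * (if even k then fst (sz (map c [0..<k])) else snd (sz (map c [0..<k])))"
proof (induction k rule: nat_less_induct)
  case (1 k)
  show ?case
  proof (cases k)
    case 0 then show ?thesis by simp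
  next
    case (Suc k1)
    show ?thesis
    proof (cases k1)
      case 0
      then show ?thesis using Suc
        by (simp add: trid_1 dd_def szstep_def sz_def one_pCons)
    next
      case (Suc m)
      have k: "k = Suc (Suc m)" using \<open>k = Suc k1\<close> Suc by simp
      have IH1: "det (trid (Suc m) (dd c) (uu c)) = (-1)^((Suc m+1) div 2) *
         (if even (Suc m) then fst (sz (map c [0..<Suc m])) else snd (sz (map c [0..<Suc m])))"
        using "1.IH" "1.prems" k by (simp del: upt_Suc)
      have IH0: "det (trid m (dd c) (uu c)) = (-1)^((m+1) div 2) *
         (if even m then fst (sz (map c [0..<m])) else snd (sz (map c [0..<m])))"
        using "1.IH" "1.prems" k by (simp del: upt_Suc)
      obtain p q where pq: "sz (map c [0..<m]) = (p,q)" by fastforce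
      define a where "a = c m"
      define b where "b = c (Suc m)"
      have ra: "[:cmv_rho a:]^2 = 1 - [:cnj a:] * [:a:]"
        using rho_sq "1.prems" k a_def by auto
      have s1: "sz (map c [0..<Suc m]) = (Xp*p - [:cnj a:]*q, q - [:a:]*(Xp*p))"
        using pq a_def by (simp only: map_upt_Suc sz_snoc szstep_def pc sm fst_conv snd_conv)
      have s2: "sz (map c [0..<Suc (Suc m)]) = szstep (sz (map c [0..<Suc m])) b"
        using b_def by (simp only: map_upt_Suc sz_snoc)
      have rec: "det (trid k (dd c) (uu c)) = dd c (Suc m) * det (trid (Suc m) (dd c) (uu c)) - uu c m ^ 2 * det (trid m (dd c) (uu c))"
        using k trid_rec by simp
      have s2': "sz (map c [0..<k]) = (Xp*(Xp*p - [:cnj a:]*q) - [:cnj b:]*(q - [:a:]*(Xp*p)),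
              (q - [:a:]*(Xp*p)) - [:b:]*(Xp*(Xp*p - [:cnj a:]*q)))"
        using s2 s1 k by (simp only: szstep_def pc sm fst_conv snd_conv)
      show ?thesis
      proof (cases "even m")
        case True
        then obtain t where t: "m = 2*t" by blast
        have sg1: "(-1::complex poly)^((Suc m+1) div 2) = - ((-1)^((m+1) div 2))" using t by simp
        have sg2: "(-1::complex poly)^((k+1) div 2) = - ((-1)^((m+1) div 2))" using t k by simp
        have dm: "dd c (Suc m) = - ([:cnj b:] + [:cnj a:] * Xp)"
          using True a_def b_def by (simp only: dd_def h1 if_False if_True even_Suc Suc_not_Zero diff_Suc_1 simp_thms)
        have um: "uu c m ^ 2 = Xp^2 * [:cmv_rho a:]^2"
          using True a_def by (simp only: uu_def h3 if_True)
        have "det (trid k (dd c) (uu c)) = (- ([:cnj b:] + [:cnj a:] * Xp)) * (- ((-1)^((m+1) div 2)) * (q - [:a:]*(Xp*p)))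
            - (Xp^2 * (1 - [:cnj a:] * [:a:])) * ((-1)^((m+1) div 2) * p)"
        proof -
          have D1: "det (trid (Suc m) (dd c) (uu c)) = - ((-1)^((m+1) div 2)) * (q - [:a:]*(Xp*p))"
            using IH1 True by (simp only: sg1 even_Suc not_True_eq_False if_False s1 snd_conv simp_thms)
          have D0: "det (trid m (dd c) (uu c)) = (-1)^((m+1) div 2) * p"
            using IH0 True pq by (simp only: if_True fst_conv simp_thms)
          show ?thesis by (simp only: rec dm um ra D1 D0)
        qed
        also have "\<dots> = (-1)^((k+1) div 2) * fst (sz (map c [0..<k]))"
          unfolding sg2 s2' fst_conv
          by (rule alg_even[where X=Xp and A="[:a:]" and Ac="[:cnj a:]" and Bc="[:cnj b:]" and s="(-1)^((m+1) div 2)"])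
        finally have calc: "det (trid k (dd c) (uu c)) = (-1)^((k+1) div 2) * fst (sz (map c [0..<k]))" .
        have "even k" using k True by simp
        then show ?thesis using calc by (simp only: if_True)
      next
        case False
        then obtain t where t: "m = 2*t+1" by (metis oddE)
        have sg1: "(-1::complex poly)^((Suc m+1) div 2) = ((-1)^((m+1) div 2))" using t by simp
        have sg2: "(-1::complex poly)^((k+1) div 2) = - ((-1)^((m+1) div 2))" using t k by simp
        have dm: "dd c (Suc m) = [:a:] + [:b:] * Xp"
          using False a_def b_def by (simp only: dd_def pc2 if_False if_True even_Suc Suc_not_Zero diff_Suc_1 simp_thms)
        have um: "uu c m ^ 2 = [:cmv_rho a:]^2"
          using False a_def by (simp only: uu_def h4 if_False)
        have "det (trid k (dd c) (uu c)) = ([:a:] + [:b:] * Xp) * ((-1)^((m+1) div 2) * (Xp*p - [:cnj a:]*q))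
            - (1 - [:cnj a:] * [:a:]) * ((-1)^((m+1) div 2) * q)"
        proof -
          have D1: "det (trid (Suc m) (dd c) (uu c)) = (-1)^((m+1) div 2) * (Xp*p - [:cnj a:]*q)"
            using IH1 False by (simp only: sg1 even_Suc not_False_eq_True if_True s1 fst_conv simp_thms)
          have D0: "det (trid m (dd c) (uu c)) = (-1)^((m+1) div 2) * q"
            using IH0 False pq by (simp only: if_False snd_conv simp_thms)
          show ?thesis by (simp only: rec dm um ra D1 D0)
        qed
        also have "\<dots> = (-1)^((k+1) div 2) * snd (sz (map c [0..<k]))"
          unfolding sg2 s2' snd_conv
          by (rule alg_odd[where X=Xp and A="[:a:]" and Ac="[:cnj a:]" and B="[:b:]" and s="(-1)^((m+1) div 2)"])
        finally have calc: "det (trid k (dd c) (uu c)) = (-1)^((k+1) div 2) * snd (sz (map c [0..<k]))" .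
        have "odd k" using k False by simp
        then show ?thesis using calc by (simp only: if_False)
      qed
    qed
  qed
qed


lemma L_entry:
  assumes N: "N = length al + 1" and i: "i < N" and j: "j < N"
  shows "cmv_L N al b $$ (i,j) =
    (if i = j then (if even i then cnj ((al@[b])!i) else - ((al@[b])!(i-1)))
     else if j = Suc i then (if even i then cmv_rho ((al@[b])!i) else 0)
     else if i = Suc j then (if even j then cmv_rho ((al@[b])!j) else 0) else 0)"
proof -
  have e: "cmv_L N al b $$ (i,j) = (if i div 2 = j div 2 \<and> 2 * (i div 2) + 1 < N
       then theta_entry (al ! (2 * (i div 2))) (i mod 2) (j mod 2)
     else if i = j then cnj b else 0)" using i j by (simp add: cmv_L_def)
  consider (d) "i = j" | (u) "j = Suc i" | (l) "i = Suc j" | (o) "i \<noteq> j" "j \<noteq> Suc i" "i \<noteq> Suc j" by blast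
  then show ?thesis
  proof cases
    case d
    show ?thesis
    proof (cases "even i")
      case True
      show ?thesis
      proof (cases "2 * (i div 2) + 1 < N")
        case True2: True
        have "2 * (i div 2) = i" "i mod 2 = 0" using True by auto
        moreover have "i < length al" using True2 \<open>2 * (i div 2) = i\<close> N by simp
        ultimately show ?thesis unfolding e using d True True2
          by (simp add: theta_entry_def nth_append)
      next
        case False2: False
        have "i = length al" using False2 True N i by presburger
        then show ?thesis unfolding e using d True False2 by simp
      qed
    next
      case False
      have "2 * (i div 2) = i - 1" "i mod 2 = 1" "i - 1 < length al" "2 * (i div 2) + 1 < N"
        using False i N by presburger+
      then show ?thesis unfolding e using d False by (simp add: theta_entry_def nth_append)
    qed
  next
    case u
    show ?thesis
    proof (cases "even i")
      case True
      have "i div 2 = j div 2" "2 * (i div 2) = i" "i mod 2 = 0" "j mod 2 = 1" "i < length al" "2 * (i div 2) + 1 < N"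
        using True u i j N by presburger+
      then show ?thesis unfolding e using u True by (simp add: theta_entry_def nth_append)
    next
      case False
      have "i div 2 \<noteq> j div 2" using False u by presburger
      then show ?thesis unfolding e using u False by simp
    qed
  next
    case l
    show ?thesis
    proof (cases "even j")
      case True
      have "i div 2 = j div 2" "2 * (i div 2) = j" "i mod 2 = 1" "j mod 2 = 0" "j < length al" "2 * (i div 2) + 1 < N"
        using True l i j N by presburger+
      then show ?thesis unfolding e using l True by (simp add: theta_entry_def nth_append)
    next
      case False
      have "i div 2 \<noteq> j div 2" using False l by presburger
      then show ?thesis unfolding e using l False by simp
    qed
  next
    case o
    have "i div 2 \<noteq> j div 2" using o by presburger
    then show ?thesis unfolding e using o by simp
  qed
qed

lemma M_entry:
  assumes N: "N = length al + 1" and i: "i < N" and j: "j < N"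
  shows "cmv_M N al b $$ (i,j) =
    (if i = j then (if i = 0 then 1 else if odd i then cnj ((al@[b])!i) else - ((al@[b])!(i-1)))
     else if j = Suc i then (if odd i then cmv_rho ((al@[b])!i) else 0)
     else if i = Suc j then (if odd j then cmv_rho ((al@[b])!j) else 0) else 0)"
proof -
  have e: "cmv_M N al b $$ (i,j) = (if i = 0 \<and> j = 0 then 1
     else if 1 \<le> i \<and> 1 \<le> j \<and> (i - 1) div 2 = (j - 1) div 2 \<and> 2 * ((i - 1) div 2) + 2 < N
       then theta_entry (al ! (2 * ((i - 1) div 2) + 1)) ((i - 1) mod 2) ((j - 1) mod 2)
     else if i = j then cnj b else 0)" using i j by (simp add: cmv_M_def)
  consider (d) "i = j" | (u) "j = Suc i" | (l) "i = Suc j" | (o) "i \<noteq> j" "j \<noteq> Suc i" "i \<noteq> Suc j" by blast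
  then show ?thesis
  proof cases
    case d
    show ?thesis
    proof (cases "i = 0")
      case True then show ?thesis unfolding e using d by simp
    next
      case nz: False
      show ?thesis
      proof (cases "odd i")
        case True
        show ?thesis
        proof (cases "2 * ((i - 1) div 2) + 2 < N")
          case True2: True
          have "2 * ((i - 1) div 2) + 1 = i" "(i - 1) mod 2 = 0" "i < length al"
            using True True2 N by presburger+
          then show ?thesis unfolding e using d True True2 nz by (simp add: theta_entry_def nth_append)
        next
          case False2: False
          have "i = length al" using False2 True N i by presburger
          then show ?thesis unfolding e using d True False2 nz by simp
        qed
      next
        case False
        have "2 * ((i - 1) div 2) + 1 = i - 1" "(i - 1) mod 2 = 1" "i - 1 < length al" "2 * ((i - 1) div 2) + 2 < N"
          using False i N nz by presburger+
        then show ?thesis unfolding e using d False nz by (simp add: theta_entry_def nth_append)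
      qed
    qed
  next
    case u
    show ?thesis
    proof (cases "odd i")
      case True
      have "(i - 1) div 2 = (j - 1) div 2" "2 * ((i - 1) div 2) + 1 = i" "(i - 1) mod 2 = 0" "(j - 1) mod 2 = 1"
           "i < length al" "2 * ((i - 1) div 2) + 2 < N" "1 \<le> i"
        using True u i j N by presburger+
      then show ?thesis unfolding e using u True by (simp add: theta_entry_def nth_append)
    next
      case False
      have "i = 0 \<or> (i - 1) div 2 \<noteq> (j - 1) div 2" using False u by presburger
      then show ?thesis unfolding e using u False by auto
    qed
  next
    case l
    show ?thesis
    proof (cases "odd j")
      case True
      have "(i - 1) div 2 = (j - 1) div 2" "2 * ((i - 1) div 2) + 1 = j" "(i - 1) mod 2 = 1" "(j - 1) mod 2 = 0"
           "j < length al" "2 * ((i - 1) div 2) + 2 < N" "1 \<le> j"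
        using True l i j N by presburger+
      then show ?thesis unfolding e using l True by (simp add: theta_entry_def nth_append)
    next
      case False
      have "j = 0 \<or> (i - 1) div 2 \<noteq> (j - 1) div 2" using False l by presburger
      then show ?thesis unfolding e using l False by auto
    qed
  next
    case o
    have "i = 0 \<or> j = 0 \<or> (i - 1) div 2 \<noteq> (j - 1) div 2" using o by presburger
    then show ?thesis unfolding e using o by auto
  qed
qed


lemma sum_two:
  assumes "i < N" "\<forall>k<N. k \<noteq> i \<and> k \<noteq> Suc i \<longrightarrow> f k = 0"
  shows "(\<Sum>k<N. f k) = f i + (if Suc i < N then f (Suc i) else (0::'a::comm_monoid_add))"
proof -
  have "(\<Sum>k<N. f k) = (\<Sum>k\<in>{i..<min N (Suc (Suc i))}. f k)"
    by (rule sum.mono_neutral_right) (use assms in auto)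
  also have "\<dots> = f i + (if Suc i < N then f (Suc i) else 0)"
  proof (cases "Suc i < N")
    case True
    then have "{i..<min N (Suc (Suc i))} = {i, Suc i}" by auto
    then show ?thesis using True by simp
  next
    case False
    then have "{i..<min N (Suc (Suc i))} = {i}" using assms(1) by auto
    then show ?thesis using False by simp
  qed
  finally show ?thesis .
qed

lemma rho_sq_c: "cmod a \<le> 1 \<Longrightarrow> cmv_rho a * cmv_rho a = 1 - cnj a * a"
proof -
  assume h: "cmod a \<le> 1"
  have nn: "0 \<le> 1 - (cmod a)^2" using h by (simp add: abs_square_le_1)
  have "cmv_rho a * cmv_rho a = complex_of_real (sqrt (1 - (cmod a)^2) * sqrt (1 - (cmod a)^2))"
    by (simp only: cmv_rho_def of_real_mult)
  also have "sqrt (1 - (cmod a)^2) * sqrt (1 - (cmod a)^2) = 1 - (cmod a)^2"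
    using nn real_sqrt_mult_self abs_of_nonneg by metis
  also have "\<dots> = 1 - cnj a * a"
    by (metis complex_norm_square mult.commute of_real_1 of_real_diff)
  finally show ?thesis .
qed

lemma cnj_rho[simp]: "cnj (cmv_rho a) = cmv_rho a" by (simp add: cmv_rho_def)

lemma L_unitary:
  assumes N: "N = length al + 1" and al: "\<forall>a\<in>set al. cmod a < 1" and b: "cmod b = 1"
  shows "cmv_L N al b * map_mat cnj (cmv_L N al b) = 1\<^sub>m N"
proof (rule eq_matI)
  let ?L = "cmv_L N al b"
  let ?c = "\<lambda>k. (al@[b])!k"
  have cle: "k < N \<Longrightarrow> cmod (?c k) \<le> 1" for k
    using al b N by (cases "k < length al") (auto simp: nth_append less_imp_le)
  have cN: "cnj (?c (N-1)) * ?c (N-1) = 1" using b N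
    by (simp add: nth_append) (metis complex_norm_square mult.commute of_real_1 power_one)
  fix i j assume i: "i < dim_row (1\<^sub>m N)" and j: "j < dim_col (1\<^sub>m N)"
  hence i: "i < N" and j: "j < N" by auto
  have dimL: "dim_row ?L = N" "dim_col ?L = N" by (simp_all add: cmv_L_def)
  have prod: "(?L * map_mat cnj ?L) $$ (i,j) = (\<Sum>k<N. ?L $$ (i,k) * cnj (?L $$ (k,j)))"
    using i j dimL by (simp add: scalar_prod_def lessThan_atLeast0)
  note Le = L_entry[OF N]
  show "(?L * map_mat cnj ?L) $$ (i,j) = 1\<^sub>m N $$ (i,j)"
  proof (cases "even i")
    case True
    have "(\<Sum>k<N. ?L $$ (i,k) * cnj (?L $$ (k,j))) =
        ?L $$ (i,i) * cnj (?L $$ (i,j)) + (if Suc i < N then ?L $$ (i,Suc i) * cnj (?L $$ (Suc i,j)) else 0)"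
      by (rule sum_two[OF i]) (use i True in \<open>auto simp: Le\<close>)
    also have "\<dots> = (if i = j then 1 else 0)"
    proof -
      consider (d) "j = i" | (u) "j = Suc i" | (o) "j \<noteq> i" "j \<noteq> Suc i" by blast
      then show ?thesis
      proof cases
        case d
        show ?thesis
        proof (cases "Suc i < N")
          case True2: True
          have "cmod (?c i) \<le> 1" using cle i by blast
          then show ?thesis using d True True2 i by (simp add: Le rho_sq_c)
        next
          case False2: False
          have "i = N - 1" using False2 i by simp
          then show ?thesis using d True False2 i cN by (simp add: Le mult.commute)
        qed
      next
        case u
        then show ?thesis using True i j by (simp add: Le)
      next
        case o
        then show ?thesis using True i j by (auto simp: Le)
      qed
    qed
    finally show ?thesis using prod i j by simp
  next
    case False
    then obtain i0 where i0: "i = Suc i0" by (cases i) auto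
    have i1: "i0 < N" using i i0 by simp
    have ev0: "even i0" using False i0 by simp
    have "(\<Sum>k<N. ?L $$ (i,k) * cnj (?L $$ (k,j))) =
        ?L $$ (i,i0) * cnj (?L $$ (i0,j)) + (if Suc i0 < N then ?L $$ (i,Suc i0) * cnj (?L $$ (Suc i0,j)) else 0)"
      by (rule sum_two[OF i1]) (use i i0 ev0 in \<open>auto simp: Le\<close>)
    also have "\<dots> = (if i = j then 1 else 0)"
    proof -
      consider (d) "j = i" | (l) "j = i0" | (o) "j \<noteq> i" "j \<noteq> i0" by blast
      then show ?thesis
      proof cases
        case d
        have "cmod (?c i0) \<le> 1" using cle i1 by blast
        then show ?thesis using d ev0 i i0 by (simp add: Le rho_sq_c)
      next
        case l
        then show ?thesis using ev0 i j i0 by (simp add: Le)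
      next
        case o
        then show ?thesis using ev0 i j i0 by (auto simp: Le)
      qed
    qed
    finally show ?thesis using prod i j by simp
  qed
qed (auto simp: cmv_L_def)



lemma hX: "Xp * [:y:] - [:x:] = [:-x, y::complex:]" by (simp add: Xp_def)

lemma g1: "[:-1, y:] = Polynomial.smult y Xp - 1" by (simp add: Xp_def one_pCons)
lemma g2: "[:x, y:] = Polynomial.smult y Xp - [:-x::complex:]" by (simp add: Xp_def)
lemma g3: "[:-y, -x:] = - Polynomial.smult x Xp - [:y::complex:]" by (simp add: Xp_def)

lemma g4: "[:0, y:] = Polynomial.smult y Xp" by (simp add: Xp_def)

lemma T_eq:
  assumes N: "N = length al + 1"
  shows "trid N (dd (\<lambda>k. (al@[b])!k)) (uu (\<lambda>k. (al@[b])!k)) =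
    Xp \<cdot>\<^sub>m map_mat (\<lambda>x. [:x:]) (map_mat cnj (cmv_L N al b)) - map_mat (\<lambda>x. [:x:]) (cmv_M N al b)"
proof (rule eq_matI)
  fix i j assume "i < dim_row (Xp \<cdot>\<^sub>m map_mat (\<lambda>x. [:x:]) (map_mat cnj (cmv_L N al b)) - map_mat (\<lambda>x. [:x:]) (cmv_M N al b))"
    "j < dim_col (Xp \<cdot>\<^sub>m map_mat (\<lambda>x. [:x:]) (map_mat cnj (cmv_L N al b)) - map_mat (\<lambda>x. [:x:]) (cmv_M N al b))"
  hence i: "i < N" and j: "j < N" by (auto simp: cmv_M_def)
  have dL: "dim_row (cmv_L N al b) = N" "dim_col (cmv_L N al b) = N" by (auto simp: cmv_L_def)
  have dM: "dim_row (cmv_M N al b) = N" "dim_col (cmv_M N al b) = N" by (auto simp: cmv_M_def)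
  have e: "(Xp \<cdot>\<^sub>m map_mat (\<lambda>x. [:x:]) (map_mat cnj (cmv_L N al b)) - map_mat (\<lambda>x. [:x:]) (cmv_M N al b)) $$ (i,j)
     = Xp * [:cnj (cmv_L N al b $$ (i,j)):] - [:cmv_M N al b $$ (i,j):]"
    using i j dL dM by simp
  note Le = L_entry[OF N i j] and Me = M_entry[OF N i j]
  show "trid N (dd (\<lambda>k. (al@[b])!k)) (uu (\<lambda>k. (al@[b])!k)) $$ (i,j) =
    (Xp \<cdot>\<^sub>m map_mat (\<lambda>x. [:x:]) (map_mat cnj (cmv_L N al b)) - map_mat (\<lambda>x. [:x:]) (cmv_M N al b)) $$ (i,j)"
  proof -
    have t: "trid N (dd (\<lambda>k. (al@[b])!k)) (uu (\<lambda>k. (al@[b])!k)) $$ (i,j) =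
      (if i = j then dd (\<lambda>k. (al@[b])!k) i else if j = Suc i then uu (\<lambda>k. (al@[b])!k) i
      else if i = Suc j then uu (\<lambda>k. (al@[b])!k) j else 0)" using i j by (simp add: trid_def)
    consider (d) "i = j" | (u) "j = Suc i" | (l) "i = Suc j" | (o) "i \<noteq> j" "j \<noteq> Suc i" "i \<noteq> Suc j" by blast
    then show ?thesis
    proof cases
      case d
      then show ?thesis unfolding t e Le Me by (cases "i = 0"; cases "even i") (simp_all add: hX dd_def g1 g2 g3)
    next
      case u
      then show ?thesis unfolding t e Le Me by (cases "even i") (simp_all add: hX uu_def g4)
    next
      case l
      then show ?thesis unfolding t e Le Me by (cases "even j") (simp_all add: hX uu_def g4)
    next
      case o
      have l0: "cmv_L N al b $$ (i,j) = 0" using o by (simp only: Le if_False)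
      have m0: "cmv_M N al b $$ (i,j) = 0" using o by (simp only: Me if_False)
      have t0: "trid N (dd (\<lambda>k. (al@[b])!k)) (uu (\<lambda>k. (al@[b])!k)) $$ (i,j) = 0"
        using o by (simp only: t if_False)
      show ?thesis unfolding t0 e l0 m0 by simp
    qed
  qed
next
  show "dim_row (trid N (dd (\<lambda>k. (al@[b])!k)) (uu (\<lambda>k. (al@[b])!k))) = dim_row (Xp \<cdot>\<^sub>m map_mat (\<lambda>x. [:x:]) (map_mat cnj (cmv_L N al b)) - map_mat (\<lambda>x. [:x:]) (cmv_M N al b))"
    by (simp add: trid_def cmv_M_def)
next
  show "dim_col (trid N (dd (\<lambda>k. (al@[b])!k)) (uu (\<lambda>k. (al@[b])!k))) = dim_col (Xp \<cdot>\<^sub>m map_mat (\<lambda>x. [:x:]) (map_mat cnj (cmv_L N al b)) - map_mat (\<lambda>x. [:x:]) (cmv_M N al b))"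
    by (simp add: trid_def cmv_M_def)
qed

lemma sgnp: "(- 1::complex poly) ^ k * p = Polynomial.smult ((- 1) ^ k) p"
  by (induction k) (simp_all add: mult.assoc)

lemma cph_hom: "comm_ring_hom (\<lambda>x::complex. [:x:])" by unfold_locales auto

lemma charpoly_CMV:
  assumes al: "\<forall>a\<in>set al. cmod a < 1" and b: "cmod b = 1"
  shows "char_poly (CMV al b) = fst (sz (al @ [b]))"
proof -
  define N where "N = length al + 1"
  define L where "L = cmv_L N al b"
  define M where "M = cmv_M N al b"
  define c where "c = (\<lambda>k. (al@[b])!k)"
  have N: "N = length al + 1" by (simp add: N_def)
  have Lc: "L \<in> carrier_mat N N" by (simp add: L_def cmv_L_def)
  have Mc: "M \<in> carrier_mat N N" by (simp add: M_def cmv_M_def)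
  have Lbc: "map_mat cnj L \<in> carrier_mat N N" using Lc by simp
  have C: "CMV al b = L * M" by (simp add: CMV_def L_def M_def N_def)
  let ?h = "map_mat (\<lambda>x::complex. [:x:])"
  have srh: "semiring_hom (\<lambda>x::complex. [:x:])" by unfold_locales auto
  have hm1: "?h (L * map_mat cnj L) = ?h L * ?h (map_mat cnj L)"
    by (rule semiring_hom.mat_hom_mult[OF srh Lc Lbc])
  have hm2: "?h (L * M) = ?h L * ?h M"
    by (rule semiring_hom.mat_hom_mult[OF srh Lc Mc])
  have U: "L * map_mat cnj L = 1\<^sub>m N" unfolding L_def by (rule L_unitary[OF N al b])
  have h1: "?h (1\<^sub>m N) = 1\<^sub>m N" by (rule semiring_hom.mat_hom_one[OF srh])
  have T: "trid N (dd c) (uu c) = Xp \<cdot>\<^sub>m ?h (map_mat cnj L) - ?h M"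
    unfolding c_def L_def M_def by (rule T_eq[OF N])
  have hLc: "?h L \<in> carrier_mat N N" "?h (map_mat cnj L) \<in> carrier_mat N N" "?h M \<in> carrier_mat N N"
    using Lc Mc by auto
  have "?h L * trid N (dd c) (uu c) = ?h L * (Xp \<cdot>\<^sub>m ?h (map_mat cnj L)) - ?h L * ?h M"
    unfolding T by (rule mult_minus_distrib_mat[OF hLc(1)]) (use hLc in auto)
  also have "?h L * (Xp \<cdot>\<^sub>m ?h (map_mat cnj L)) = Xp \<cdot>\<^sub>m (?h L * ?h (map_mat cnj L))"
    by (rule mult_smult_distrib[OF hLc(1) hLc(2)])
  also have "?h L * ?h (map_mat cnj L) = 1\<^sub>m N" using hm1 U h1 by simp
  also have "?h L * ?h M = ?h (L * M)" using hm2 by simp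
  finally have R: "?h L * trid N (dd c) (uu c) = Xp \<cdot>\<^sub>m 1\<^sub>m N - ?h (L * M)" .
  have LMc: "L * M \<in> carrier_mat N N" using Lc Mc by simp
  have cpm: "char_poly_matrix (L * M) = ?h L * trid N (dd c) (uu c)"
    unfolding R char_poly_matrix_def
    by (rule eq_matI) (use LMc in \<open>auto simp: Xp_def\<close>)
  have "char_poly (CMV al b) = det (?h L) * det (trid N (dd c) (uu c))"
    unfolding char_poly_def C cpm by (rule det_mult[OF hLc(1)]) simp
  also have "det (?h L) = [:det L:]" by (rule comm_ring_hom.hom_det[OF cph_hom])
  also have "det (trid N (dd c) (uu c)) = (-1)^((N+1) div 2) *
      (if even N then fst (sz (map c [0..<N])) else snd (sz (map c [0..<N])))"
  proof (rule trid_sz, intro allI impI)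
    fix j assume "j < N"
    then show "cmod (c j) \<le> 1" using al b N
      by (cases "j < length al") (auto simp: c_def nth_append less_imp_le)
  qed
  also have "map c [0..<N] = al @ [b]" unfolding c_def N
    by (metis length_append_singleton map_nth Suc_eq_plus1)
  finally have cp: "char_poly (CMV al b) = [:det L:] * ((-1)^((N+1) div 2) *
      (if even N then fst (sz (al @ [b])) else snd (sz (al @ [b]))))" .
  have "\<exists>\<kappa>. char_poly (CMV al b) = Polynomial.smult \<kappa> (fst (sz (al @ [b])))"
  proof (cases "even N")
    case True
    have "char_poly (CMV al b) = Polynomial.smult (det L * (-1)^((N+1) div 2)) (fst (sz (al @ [b])))"
      using cp True by (simp only: if_True sgnp smult_smult sm[symmetric])
    then show ?thesis by blast
  next
    case False
    obtain p q where pq: "sz al = (p,q)" by fastforce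
    have bb: "b * cnj b = 1" using b
      by (metis complex_norm_square of_real_1 power_one)
    have sn: "snd (sz (al @ [b])) = Polynomial.smult (- b) (fst (sz (al @ [b])))"
      using pq bb by (simp add: szstep_def smult_diff_right)
    have "char_poly (CMV al b) = Polynomial.smult (det L * ((-1)^((N+1) div 2) * (- b))) (fst (sz (al @ [b])))"
      using cp False unfolding sn by (simp only: if_False sgnp smult_smult sm[symmetric])
    then show ?thesis by blast
  qed
  then obtain \<kappa> where k: "char_poly (CMV al b) = Polynomial.smult \<kappa> (fst (sz (al @ [b])))" by blast
  have CMVc: "CMV al b \<in> carrier_mat N N" using C LMc by simp
  have "coeff (char_poly (CMV al b)) N = 1" using degree_monic_char_poly[OF CMVc] by simp
  moreover have "coeff (fst (sz (al @ [b]))) N = 1" using sz_props[of "al @ [b]"] N by simp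
  ultimately have "\<kappa> = 1" using k by simp
  then show ?thesis using k by simp
qed


lemma exp_window:
  assumes "a < b" "b < a + 2 * pi"
  shows "exp (\<i> * of_real a) \<noteq> exp (\<i> * of_real (b::real))"
proof
  assume "exp (\<i> * of_real a) = exp (\<i> * of_real b)"
  hence "cis a = cis b" by (simp add: cis_conv_exp mult.commute)
  hence "cis (b - a) = 1" by (simp add: cis_divide[symmetric])
  hence "cos (b - a) = 1" by (metis cis.sel(1) one_complex.sel(1))
  then obtain k :: int where k: "b - a = real_of_int k * 2 * pi" using cos_one_2pi_int by blast
  have p: "0 < 2*pi" by simp
  have d1: "0 < b - a" "b - a < 2 * pi" using assms by simp_all
  have "0 < real_of_int k * (2*pi)" using k d1 by (simp add: mult.assoc)
  hence "0 < real_of_int k" using p by (simp add: zero_less_mult_iff)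
  moreover have "real_of_int k * (2*pi) < 1 * (2*pi)" using k d1 by (simp add: mult.assoc)
  hence "real_of_int k < 1" using p mult_less_cancel_right_pos by blast
  ultimately show False by simp
qed

lemma incr:
  assumes "\<forall>k. 1 \<le> k \<and> k < n \<longrightarrow> (x::nat\<Rightarrow>real) k < x (Suc k)" "1 \<le> i" "i < j" "j \<le> n"
  shows "x i < x j"
  using assms(3,4)
proof (induction j)
  case 0 then show ?case by simp
next
  case (Suc j)
  show ?case
  proof (cases "i = j")
    case True then show ?thesis using assms(1,2) Suc.prems by auto
  next
    case False
    then have "x i < x j" using Suc by simp
    also have "x j < x (Suc j)" using assms(1,2) Suc.prems False by auto
    finally show ?thesis .
  qed
qed

lemma card_window:
  assumes "\<forall>k. 1 \<le> k \<and> k < n \<longrightarrow> (x::nat\<Rightarrow>real) k < x (Suc k)" "x n < x 1 + 2 * pi"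
  shows "card ((\<lambda>j. exp (\<i> * of_real (x j))) ` {1..n}) = n"
proof -
  have "inj_on (\<lambda>j. exp (\<i> * of_real (x j))) {1..n}"
  proof (rule inj_onI, rule ccontr)
    fix i j assume ij: "i \<in> {1..n}" "j \<in> {1..n}" "exp (\<i> * of_real (x i)) = exp (\<i> * of_real (x j))" "i \<noteq> j"
    have le1: "x 1 \<le> x k" if "k \<in> {1..n}" for k
      using incr[OF assms(1), of 1 k] that by (cases "k = 1") auto
    have len: "x k \<le> x n" if "k \<in> {1..n}" for k
      using incr[OF assms(1), of k n] that by (cases "k = n") auto
    show False
    proof (cases "i < j")
      case True
      have "x i < x j" using incr[OF assms(1), of i j] True ij by auto
      moreover have "x j < x i + 2 * pi" using len[OF ij(2)] le1[OF ij(1)] assms(2) by simp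
      ultimately show False using exp_window ij(3) by blast
    next
      case False
      hence "j < i" using ij(4) by simp
      have "x j < x i" using incr[OF assms(1), of j i] \<open>j < i\<close> ij by auto
      moreover have "x i < x j + 2 * pi" using len[OF ij(1)] le1[OF ij(2)] assms(2) by simp
      ultimately show False using exp_window ij(3) by metis
    qed
  qed
  then show ?thesis by (simp add: card_image)
qed

lemma same_spec_charpoly:
  fixes A B :: "complex mat"
  assumes A: "A \<in> carrier_mat n n" and B: "B \<in> carrier_mat n n"
    and sA: "{k. eigenvalue A k} = S" and sB: "{k. eigenvalue B k} = S" and cS: "card S = n"
  shows "char_poly A = char_poly B"
proof -
  have key: "char_poly C = (\<Prod>a\<in>S. [:- a, 1:])" if C: "C \<in> carrier_mat n n" and sC: "{k. eigenvalue C k} = S" for C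
  proof -
    obtain as where as: "char_poly C = (\<Prod>a\<leftarrow>as. [:- a, 1:])" "length as = n"
      using char_poly_factorized[OF C] by blast
    have "set as = S"
    proof -
      have "{k. eigenvalue C k} = {k. poly (char_poly C) k = 0}"
        using eigenvalue_root_char_poly[OF C] by blast
      also have "\<dots> = set as" unfolding as(1)
        by (auto simp: poly_prod_list prod_list_zero_iff)
      finally show ?thesis using sC by simp
    qed
    hence "distinct as" using cS as(2) by (simp add: card_distinct)
    then show ?thesis using as(1) \<open>set as = S\<close> prod.distinct_set_conv_list[of as "\<lambda>a. [:- a, 1:]"] by simp
  qed
  show ?thesis using key[OF A sA] key[OF B sB] by simp
qed

lemma CMV_carrier: "CMV al b \<in> carrier_mat (length al + 1) (length al + 1)"
  unfolding CMV_def by (rule mult_carrier_mat[of _ _ "length al + 1"]) (simp_all add: cmv_L_def cmv_M_def)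

lemma alg_main: fixes X u v e A' B A :: "'a::comm_ring_1"
  assumes "X*u = e*v" "X*(X*u - A'*v) - B*(v - A*(X*u)) = 0"
  shows "(X*u) * (e*X - A'*X - B + B*A*e) = 0"
proof -
  have "e * (X*(X*u - A'*v) - B*(v - A*(X*u))) = 0" using assms(2) by simp
  then show ?thesis using assms(1) by (simp add: algebra_simps)
qed


lemma r1: fixes X p q p' q' C :: "'a::comm_ring_1"
  shows "X*p - C*q = X*p' - C*q' \<Longrightarrow> X*(p-p') = C*(q-q')"
  by (simp add: algebra_simps)

lemma r2: fixes X p q p' q' A A' B :: "'a::comm_ring_1"
  shows "X*(X*p - A'*q) - B*(q - A*(X*p)) = X*(X*p' - A'*q') - B*(q' - A*(X*p')) \<Longrightarrow>
    X*(X*(p-p') - A'*(q-q')) - B*((q-q') - A*(X*(p-p'))) = 0"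
  by (simp add: algebra_simps)

theorem theorem7:
  fixes n :: nat and x1 x2 :: "nat \<Rightarrow> real"
    and a1 a2 :: "complex list" and b11 b21 b12 b22 :: complex
  assumes n2: "n \<ge> 2"
    and ord1: "\<forall>j\<in>{1..n-1}. x1 j < x2 j"
    and ord2: "\<forall>j\<in>{1..n-2}. x2 j < x1 (j + 1)"
    and ord3: "x2 (n - 1) = x1 n"
    and ord4: "x1 n < x1 1 + 2 * pi"
    and len1: "length a1 = n - 1" and len2: "length a2 = n - 1"
    and a1_in: "\<forall>a\<in>set a1. cmod a < 1" and a2_in: "\<forall>a\<in>set a2. cmod a < 1"
    and b_unit: "cmod b11 = 1" "cmod b21 = 1" "cmod b12 = 1" "cmod b22 = 1"
    and spec11: "{k. eigenvalue (CMV a1 b11) k} = (\<lambda>j. exp (\<i> * of_real (x1 j))) ` {1..n}"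
    and spec21: "{k. eigenvalue (CMV (take (n - 2) a1) b21) k} = (\<lambda>j. exp (\<i> * of_real (x2 j))) ` {1..n-1}"
    and spec12: "{k. eigenvalue (CMV a2 b12) k} = (\<lambda>j. exp (\<i> * of_real (x1 j))) ` {1..n}"
    and spec22: "{k. eigenvalue (CMV (take (n - 2) a2) b22) k} = (\<lambda>j. exp (\<i> * of_real (x2 j))) ` {1..n-1}"
    and last_eq: "a1 ! (n - 2) = a2 ! (n - 2)"
  shows "CMV a1 b11 = CMV a2 b12 \<and> CMV (take (n - 2) a1) b21 = CMV (take (n - 2) a2) b22"
proof -
  define ys1 where "ys1 = take (n-2) a1"
  define ys2 where "ys2 = take (n-2) a2"
  define al where "al = a1 ! (n-2)"
  have a1e: "a1 = ys1 @ [al]"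
  proof -
    have "a1 = take (Suc (n-2)) a1" using len1 n2 by simp
    also have "\<dots> = ys1 @ [al]" unfolding ys1_def al_def
      by (rule take_Suc_conv_app_nth) (use len1 n2 in simp)
    finally show ?thesis .
  qed
  have a2e: "a2 = ys2 @ [al]"
  proof -
    have "a2 = take (Suc (n-2)) a2" using len2 n2 by simp
    also have "\<dots> = ys2 @ [al]" unfolding ys2_def al_def last_eq
      by (rule take_Suc_conv_app_nth) (use len2 n2 in simp)
    finally show ?thesis .
  qed
  have ly: "length ys1 = n - 2" "length ys2 = n - 2" using len1 len2 n2 by (simp_all add: ys1_def ys2_def)
  have ys1_in: "\<forall>a\<in>set ys1. cmod a < 1" using a1_in a1e by simp
  have ys2_in: "\<forall>a\<in>set ys2. cmod a < 1" using a2_in a2e by simp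
  have al_in: "cmod al < 1" using a1_in a1e by simp
  have m1: "\<forall>k. 1 \<le> k \<and> k < n \<longrightarrow> x1 k < x1 (Suc k)"
  proof (intro allI impI)
    fix k assume k: "1 \<le> k \<and> k < n"
    show "x1 k < x1 (Suc k)"
    proof (cases "k \<le> n - 2")
      case True
      have "x1 k < x2 k" using bspec[OF ord1, of k] k True by simp
      moreover have "x2 k < x1 (k+1)" using bspec[OF ord2, of k] k True by simp
      ultimately show ?thesis by simp
    next
      case False
      then have "k = n - 1" using k by simp
      have "k \<le> n - 1" using k by arith
      hence "x1 k < x2 k" using bspec[OF ord1, of k] k by simp
      moreover have "Suc k = n" using \<open>k = n - 1\<close> n2 by simp
      ultimately show ?thesis using ord3 \<open>k = n - 1\<close> by simp
    qed
  qed
  have m2: "\<forall>k. 1 \<le> k \<and> k < n - 1 \<longrightarrow> x2 k < x2 (Suc k)"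
  proof (intro allI impI)
    fix k assume k: "1 \<le> k \<and> k < n - 1"
    have "k \<le> n - 2" using k by arith
    hence "x2 k < x1 (k+1)" using bspec[OF ord2, of k] k by simp
    moreover have "k + 1 \<le> n - 1" using k by arith
    hence "x1 (k+1) < x2 (k+1)" using bspec[OF ord1, of "k+1"] k by simp
    ultimately show "x2 k < x2 (Suc k)" by simp
  qed
  have "x1 1 < x2 1" using bspec[OF ord1, of 1] n2 by simp
  hence w2: "x2 (n-1) < x2 1 + 2 * pi" using ord3 ord4 by simp
  have c1: "card ((\<lambda>j. exp (\<i> * of_real (x1 j))) ` {1..n}) = n" by (rule card_window[OF m1 ord4])
  have c2: "card ((\<lambda>j. exp (\<i> * of_real (x2 j))) ` {1..n-1}) = n - 1" by (rule card_window[OF m2 w2])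
  have C1: "CMV a1 b11 \<in> carrier_mat n n" "CMV a2 b12 \<in> carrier_mat n n"
    using CMV_carrier[of a1 b11] CMV_carrier[of a2 b12] len1 len2 n2 by auto
  have C2: "CMV ys1 b21 \<in> carrier_mat (n-1) (n-1)" "CMV ys2 b22 \<in> carrier_mat (n-1) (n-1)"
    using CMV_carrier[of ys1 b21] CMV_carrier[of ys2 b22] ly n2 by auto
  have cp1: "char_poly (CMV a1 b11) = char_poly (CMV a2 b12)"
    by (rule same_spec_charpoly[OF C1 spec11 spec12 c1])
  have cp2: "char_poly (CMV ys1 b21) = char_poly (CMV ys2 b22)"
    by (rule same_spec_charpoly[OF C2 spec21[folded ys1_def] spec22[folded ys2_def] c2])
  have F1: "fst (sz ((ys1 @ [al]) @ [b11])) = fst (sz ((ys2 @ [al]) @ [b12]))"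
    using cp1 charpoly_CMV[OF a1_in b_unit(1)] charpoly_CMV[OF a2_in b_unit(3)] a1e a2e by simp
  have F2: "fst (sz (ys1 @ [b21])) = fst (sz (ys2 @ [b22]))"
    using cp2 charpoly_CMV[OF ys1_in b_unit(2)] charpoly_CMV[OF ys2_in b_unit(4)] by simp
  have "- cnj b11 = - cnj b12" using F1 sz_fst0[of "ys1 @ [al]" b11] sz_fst0[of "ys2 @ [al]" b12] by simp
  hence b1: "b11 = b12" by simp
  have "- cnj b21 = - cnj b22" using F2 sz_fst0[of ys1 b21] sz_fst0[of ys2 b22] by simp
  hence b2: "b21 = b22" by simp
  obtain p q where pq: "sz ys1 = (p,q)" by fastforce
  obtain p' q' where pq': "sz ys2 = (p',q')" by fastforce
  have G2: "Xp*p - [:cnj b21:]*q = Xp*p' - [:cnj b21:]*q'"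
    using F2 pq pq' b2 by (simp only: sz_snoc szstep_def pc sm fst_conv snd_conv)
  have G1: "Xp*(Xp*p - [:cnj al:]*q) - [:cnj b11:]*(q - [:al:]*(Xp*p)) =
            Xp*(Xp*p' - [:cnj al:]*q') - [:cnj b11:]*(q' - [:al:]*(Xp*p'))"
    using F1 pq pq' b1 by (simp only: sz_snoc szstep_def pc sm fst_conv snd_conv)
  define u where "u = p - p'"
  define v where "v = q - q'"
  have E1: "Xp * u = [:cnj b21:] * v" using r1[OF G2] unfolding u_def v_def .
  have E2: "Xp*(Xp*u - [:cnj al:]*v) - [:cnj b11:]*(v - [:al:]*(Xp*u)) = 0"
    using r2[OF G1] unfolding u_def v_def .
  define F where "F = [:cnj b21:]*Xp - [:cnj al:]*Xp - [:cnj b11:] + [:cnj b11:]*[:al:]*[:cnj b21:]"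
  have prod0: "(Xp * u) * F = 0" unfolding F_def by (rule alg_main[OF E1 E2])
  have "poly F 0 = cnj b11 * (al * cnj b21 - 1)" by (simp add: F_def Xp_def algebra_simps)
  moreover have "cnj b11 \<noteq> 0" using b_unit(1) by auto
  moreover have "al * cnj b21 \<noteq> 1"
  proof
    assume "al * cnj b21 = 1"
    hence "cmod (al * cnj b21) = 1" by simp
    hence "cmod al = 1" using b_unit(2) by (simp add: norm_mult)
    then show False using al_in by simp
  qed
  ultimately have "poly F 0 \<noteq> 0" by simp
  hence "F \<noteq> 0" by auto
  hence "Xp * u = 0" using prod0 by simp
  hence u0: "u = 0" by (simp add: Xp_def)
  hence "[:cnj b21:] * v = 0" using E1 by simp
  moreover have "cnj b21 \<noteq> 0" using b_unit(2) by auto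
  ultimately have "v = 0" by simp
  hence "sz ys1 = sz ys2" using u0 pq pq' u_def v_def by simp
  hence "ys1 = ys2" using sz_inj ly ys1_in by metis
  hence "a1 = a2" using a1e a2e by simp
  then show ?thesis using b1 b2 ys1_def ys2_def by simp
qed


end
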